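(* Let $A$ be a matching in $K_{2n}$ and let $M$ be uniformly random among perfect matchings of $K_{2n}$ containing $A$. Apply the following procedure $r_A$: set $A':=A$, $M':=M$; while $A'\ne\emptyset$: pick any $(u,v)\in A'$; pick an edge of $M'\setminus A'$ uniformly at random and order its endpoints uniformly at random as $(x,y)$; with probability $1-\frac1{2|M'\setminus A'|+1}$ replace the edges $\{u,v\},\{x,y\}$ in $M'$ by $\{u,y\},\{v,x\}$; then remove $(u,v)$ from $A'$. Output $M'$. Then $r_A(M)$ is a uniformly random perfect matching of $K_{2n}$. Moreover, for every perfect matching $M\supseteq A$, every edge of $r_A(M)$ not in $M$ is incident to a vertex covered by $A$; in particular, if $B$ is an edge set with $A\cup B$ a matching and $B\not\subseteq M$, then $B\not\subseteq r_A(M)$.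
   Context: (When $M'\setminus A'=\emptyset$ the replacement step happens with probability $0$.) *)

theory Defs
  imports "HOL-Probability.Probability_Mass_Function"
begin

definition Kedges :: "nat \<Rightarrow> nat set set" where
  "Kedges n = {e. \<exists>x y. e = {x, y} \<and> x \<noteq> y \<and> x < 2*n \<and> y < 2*n}"

definition is_matching :: "nat \<Rightarrow> nat set set \<Rightarrow> bool" where
  "is_matching n A \<longleftrightarrow> A \<subseteq> Kedges n \<and> (\<forall>e\<in>A. \<forall>f\<in>A. e \<noteq> f \<longrightarrow> e \<inter> f = {})"

definition is_perfect_matching :: "nat \<Rightarrow> nat set set \<Rightarrow> bool" where
  "is_perfect_matching n M \<longleftrightarrow> is_matching n M \<and> \<Union>M = {..<2*n}"

text \<open>A selector picks, in state (A', M'), the oriented edge (u,v) of A' to process.\<close>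
definition valid_selector :: "nat set set \<Rightarrow> (nat set set \<Rightarrow> nat set set \<Rightarrow> nat \<times> nat) \<Rightarrow> bool" where
  "valid_selector A sel \<longleftrightarrow>
     (\<forall>A' M'. A' \<subseteq> A \<and> A' \<noteq> {} \<longrightarrow> {fst (sel A' M'), snd (sel A' M')} \<in> A')"

definition rA_step :: "(nat set set \<Rightarrow> nat set set \<Rightarrow> nat \<times> nat)
    \<Rightarrow> nat set set \<times> nat set set \<Rightarrow> (nat set set \<times> nat set set) pmf" where
  "rA_step sel s = (case s of (A', M') \<Rightarrow>
     (case sel A' M' of (u, v) \<Rightarrow>
       (let R = M' - A'; A'' = A' - {{u, v}} in
        if R = {} then return_pmf (A'', M')
        else
          do { e \<leftarrow> pmf_of_set R;
               xy \<leftarrow> pmf_of_set {(x, y). {x, y} = e \<and> x \<noteq> y};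
               b \<leftarrow> bernoulli_pmf (1 - 1 / (2 * real (card R) + 1));
               return_pmf (A'',
                 if b then (M' - {{u, v}, {fst xy, snd xy}}) \<union> {{u, snd xy}, {v, fst xy}}
                 else M') })))"

fun rA_iter :: "(nat set set \<Rightarrow> nat set set \<Rightarrow> nat \<times> nat) \<Rightarrow> nat
    \<Rightarrow> nat set set \<times> nat set set \<Rightarrow> (nat set set \<times> nat set set) pmf" where
  "rA_iter sel 0 s = return_pmf s"
| "rA_iter sel (Suc k) s = bind_pmf (rA_step sel s) (rA_iter sel k)"

text \<open>The procedure r_A: the while loop runs exactly |A| times (one edge of A' removed each time).\<close>
definition rA :: "(nat set set \<Rightarrow> nat set set \<Rightarrow> nat \<times> nat) \<Rightarrow> nat set set
    \<Rightarrow> nat set set \<Rightarrow> nat set set pmf" where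
  "rA sel A M = map_pmf snd (rA_iter sel (card A) (A, M))"

end

theory Submission
  imports Defs
begin


abbreviation PM where "PM \<equiv> is_perfect_matching"

definition mate :: "nat set set \<Rightarrow> nat \<Rightarrow> nat" where
  "mate N u = (THE z. {u, z} \<in> N)"

definition E :: "nat \<Rightarrow> (nat \<Rightarrow> nat) \<Rightarrow> nat set set" where
  "E n g = (\<lambda>w. {w, g w}) ` {..<2*n}"

definition invo :: "nat \<Rightarrow> (nat \<Rightarrow> nat) \<Rightarrow> bool" where
  "invo n m \<longleftrightarrow> (\<forall>w<2*n. m w < 2*n \<and> m w \<noteq> w \<and> m (m w) = w)"

lemma Kedges_iff: "e \<in> Kedges n \<longleftrightarrow> (\<exists>x y. e = {x, y} \<and> x \<noteq> y \<and> x < 2*n \<and> y < 2*n)"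
  unfolding Kedges_def by simp

lemma PM_edge: assumes "PM n N" "e \<in> N" shows "\<exists>x y. e = {x, y} \<and> x \<noteq> y \<and> x < 2*n \<and> y < 2*n"
  using assms unfolding is_perfect_matching_def is_matching_def Kedges_def by blast

lemma PM_disj: assumes "PM n N" "e \<in> N" "f \<in> N" "w \<in> e" "w \<in> f" shows "e = f"
  using assms unfolding is_perfect_matching_def is_matching_def by blast

lemma PM_cover: assumes "PM n N" "w < 2*n" shows "\<exists>e\<in>N. w \<in> e"
  using assms unfolding is_perfect_matching_def by blast

lemma PM_ex_mate: assumes "PM n N" "w < 2*n" shows "\<exists>z. {w, z} \<in> N \<and> z \<noteq> w"
proof -
  obtain e where e: "e \<in> N" "w \<in> e" using PM_cover[OF assms] by blast
  obtain x y where xy: "e = {x, y}" "x \<noteq> y" using PM_edge[OF assms(1) e(1)] by blast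
  show ?thesis
  proof (cases "w = x")
    case True then show ?thesis using e xy by (intro exI[of _ y]) auto
  next
    case False then have "w = y" using e xy by auto
    then show ?thesis using e xy by (intro exI[of _ x]) (auto simp: insert_commute)
  qed
qed

lemma PM_mate_uniq: assumes "PM n N" "{w, z} \<in> N" "{w, z'} \<in> N" shows "z = z'"
proof -
  have "{w, z} = {w, z'}" using PM_disj[OF assms(1) assms(2) assms(3)] by auto
  moreover obtain x y where "{w, z} = {x, y}" "x \<noteq> y" using PM_edge[OF assms(1) assms(2)] by blast
  ultimately show ?thesis by (metis doubleton_eq_iff)
qed

lemma PM_mate: assumes "PM n N" "w < 2*n" shows "{w, mate N w} \<in> N" "mate N w \<noteq> w"
proof -
  obtain z where z: "{w, z} \<in> N" "z \<noteq> w" using PM_ex_mate[OF assms] by blast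
  have "mate N w = z" unfolding mate_def
    by (rule the_equality) (use z PM_mate_uniq[OF assms(1)] in auto)
  then show "{w, mate N w} \<in> N" "mate N w \<noteq> w" using z by auto
qed

lemma PM_sub: "PM n N \<Longrightarrow> e \<in> N \<Longrightarrow> e \<subseteq> {..<2*n}"
  unfolding is_perfect_matching_def by blast

lemma PM_edge_mate: assumes "PM n N" "e \<in> N" "w \<in> e" shows "e = {w, mate N w}"
proof -
  have "w < 2*n" using PM_sub[OF assms(1,2)] assms(3) by auto
  then show ?thesis using PM_disj[OF assms(1,2) PM_mate(1)[OF assms(1)], of w] assms(3) by auto
qed

lemma PM_invo: assumes "PM n N" shows "invo n (mate N)"
  unfolding invo_def
proof (intro allI impI conjI)
  fix w assume w: "w < 2*n"
  have e: "{w, mate N w} \<in> N" "mate N w \<noteq> w" using PM_mate[OF assms w] by auto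
  show "mate N w < 2*n" using PM_sub[OF assms e(1)] by auto
  show "mate N w \<noteq> w" by fact
  have "{w, mate N w} = {mate N w, mate N (mate N w)}"
    using PM_edge_mate[OF assms e(1), of "mate N w"] by auto
  then show "mate N (mate N w) = w" using e(2) by (metis doubleton_eq_iff)
qed

lemma PM_E: assumes "PM n N" shows "E n (mate N) = N"
proof
  show "E n (mate N) \<subseteq> N" unfolding E_def using PM_mate(1)[OF assms] by auto
  show "N \<subseteq> E n (mate N)"
  proof
    fix e assume e: "e \<in> N"
    then obtain x y where xy: "e = {x, y}" "x < 2*n" using PM_edge[OF assms e] by blast
    then have "e = {x, mate N x}" using PM_edge_mate[OF assms e, of x] by auto
    then show "e \<in> E n (mate N)" unfolding E_def using xy by auto
  qed
qed

lemma E_cong: "(\<And>w. w < 2*n \<Longrightarrow> g w = g' w) \<Longrightarrow> E n g = E n g'"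
  unfolding E_def by auto

lemma invo_PM: assumes "invo n g" shows "PM n (E n g)"
  unfolding is_perfect_matching_def is_matching_def
proof (intro conjI ballI impI)
  have g: "\<And>w. w < 2*n \<Longrightarrow> g w < 2*n \<and> g w \<noteq> w \<and> g (g w) = w" using assms unfolding invo_def by blast
  show "E n g \<subseteq> Kedges n" unfolding E_def Kedges_def using g by fastforce
  fix e f assume "e \<in> E n g" "f \<in> E n g" "e \<noteq> f"
  then obtain a b where "a < 2*n" "b < 2*n" "e = {a, g a}" "f = {b, g b}" unfolding E_def by auto
  moreover have "a \<noteq> b" using calculation \<open>e \<noteq> f\<close> by auto
  moreover have "a \<noteq> g b" using calculation \<open>e \<noteq> f\<close> g[of b] by (auto simp: insert_commute)
  moreover have "g a \<noteq> b" using calculation \<open>e \<noteq> f\<close> g[of a] by (auto simp: insert_commute)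
  moreover have "g a \<noteq> g b" using calculation g[of a] g[of b] by metis
  ultimately show "e \<inter> f = {}" by auto
next
  have g: "\<And>w. w < 2*n \<Longrightarrow> g w < 2*n \<and> g w \<noteq> w \<and> g (g w) = w" using assms unfolding invo_def by blast
  show "\<Union> (E n g) = {..<2*n}" unfolding E_def using g by auto
qed

lemma invo_mate: assumes "invo n g" "w < 2*n" shows "mate (E n g) w = g w"
proof -
  have "{w, g w} \<in> E n g" unfolding E_def using assms(2) by auto
  then show ?thesis using PM_mate_uniq[OF invo_PM[OF assms(1)] _ PM_mate(1)[OF invo_PM[OF assms(1)] assms(2)]]
    by metis
qed

lemma PM_eqI: assumes "PM n N1" "PM n N2" "\<And>w. w < 2*n \<Longrightarrow> mate N1 w = mate N2 w" shows "N1 = N2"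
  using PM_E[OF assms(1)] PM_E[OF assms(2)] E_cong[of n "mate N1" "mate N2"] assms(3) by metis


definition sw :: "nat \<Rightarrow> nat \<Rightarrow> (nat \<Rightarrow> nat) \<Rightarrow> nat \<Rightarrow> nat" where
  "sw u v m w = (if w = u then v else if w = v then u else if w = m u then m v
                 else if w = m v then m u else m w)"

lemma invoD: "invo n m \<Longrightarrow> w < 2*n \<Longrightarrow> m w < 2*n \<and> m w \<noteq> w \<and> m (m w) = w"
  unfolding invo_def by blast

lemma sw_comm:
  assumes "invo n m" "u1 < 2*n" "v1 < 2*n" "u2 < 2*n" "v2 < 2*n" "u1 \<noteq> v1" "u2 \<noteq> v2"
    "u1 \<noteq> u2" "u1 \<noteq> v2" "v1 \<noteq> u2" "v1 \<noteq> v2" "w < 2*n"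
  shows "sw u1 v1 (sw u2 v2 m) w = sw u2 v2 (sw u1 v1 m) w"
proof -
  have a: "m (m u1) = u1" "m (m v1) = v1" "m (m u2) = u2" "m (m v2) = v2" "m (m w) = w"
    "m u1 \<noteq> u1" "m v1 \<noteq> v1" "m u2 \<noteq> u2" "m v2 \<noteq> v2" "m w \<noteq> w"
    using invoD[OF assms(1)] assms by auto
  show ?thesis unfolding sw_def using a assms(6-11) by (smt (verit))
qed

lemma sw_sym:
  assumes "invo n m" "u < 2*n" "v < 2*n" "u \<noteq> v" "w < 2*n"
  shows "sw u v m w = sw v u m w"
proof -
  have a: "m (m u) = u" "m (m v) = v" "m (m w) = w"
    using invoD[OF assms(1)] assms by auto
  show ?thesis unfolding sw_def using a assms(4) by (smt (verit))
qed

lemma invo_sw: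
  assumes "invo n m" "u < 2*n" "v < 2*n" "u \<noteq> v"
  shows "invo n (sw u v m)"
  unfolding invo_def
proof (intro allI impI)
  fix w assume w: "w < 2*n"
  have a: "m (m u) = u" "m (m v) = v" "m (m w) = w" "m u < 2*n" "m v < 2*n" "m w < 2*n"
    "m u \<noteq> u" "m v \<noteq> v" "m w \<noteq> w"
    using invoD[OF assms(1)] assms w by auto
  have b: "m (m (m u)) = m u" "m (m (m v)) = m v" using a by auto
  show "sw u v m w < 2 * n \<and> sw u v m w \<noteq> w \<and> sw u v m (sw u v m w) = w"
    unfolding sw_def using a b assms(2-4) w by (smt (verit))
qed

lemma sw_loc: "m u = m' u \<Longrightarrow> m v = m' v \<Longrightarrow> m w = m' w \<Longrightarrow> sw u v m w = sw u v m' w"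
  unfolding sw_def by simp

definition phi :: "nat \<Rightarrow> nat set \<Rightarrow> nat set set \<Rightarrow> nat set set" where
  "phi n e N = (if PM n N \<and> e \<in> Kedges n then E n (sw (Min e) (Max e) (mate N)) else N)"

lemma phi_uv:
  assumes "PM n N" "u < 2*n" "v < 2*n" "u \<noteq> v"
  shows "phi n {u, v} N = E n (sw u v (mate N))"
proof -
  have K: "{u, v} \<in> Kedges n" using assms unfolding Kedges_def by blast
  show ?thesis
  proof (cases "u < v")
    case True
    then have "Min {u, v} = u" "Max {u, v} = v" by auto
    then show ?thesis unfolding phi_def using K assms by simp
  next
    case False
    then have "Min {u, v} = v" "Max {u, v} = u" using assms by auto
    then have "phi n {u, v} N = E n (sw v u (mate N))" unfolding phi_def using K assms by simp
    also have "\<dots> = E n (sw u v (mate N))"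
      by (rule E_cong) (use sw_sym[OF PM_invo[OF assms(1)] assms(2,3,4)] in auto)
    finally show ?thesis .
  qed
qed

lemma phi_props:
  assumes "PM n N" "u < 2*n" "v < 2*n" "u \<noteq> v"
  shows "PM n (phi n {u, v} N)"
    and "\<And>w. w < 2*n \<Longrightarrow> mate (phi n {u, v} N) w = sw u v (mate N) w"
    and "{u, v} \<in> phi n {u, v} N"
    and "\<And>f. f \<in> N \<Longrightarrow> f \<inter> {u, v} = {} \<Longrightarrow> f \<in> phi n {u, v} N"
proof -
  have I: "invo n (sw u v (mate N))" using invo_sw[OF PM_invo[OF assms(1)] assms(2-4)] .
  show "PM n (phi n {u, v} N)" using phi_uv[OF assms] invo_PM[OF I] by simp
  show "\<And>w. w < 2*n \<Longrightarrow> mate (phi n {u, v} N) w = sw u v (mate N) w"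
    using phi_uv[OF assms] invo_mate[OF I] by simp
  show "{u, v} \<in> phi n {u, v} N" unfolding phi_uv[OF assms] E_def using assms(2)
    by (intro image_eqI[of _ _ u]) (auto simp: sw_def)
  fix f assume f: "f \<in> N" "f \<inter> {u, v} = {}"
  obtain x y where xy: "f = {x, y}" "x < 2*n" using PM_edge[OF assms(1) f(1)] by blast
  have fe: "f = {x, mate N x}" using PM_edge_mate[OF assms(1) f(1), of x] xy by auto
  have m: "mate N (mate N x) = x" "mate N (mate N u) = u" "mate N (mate N v) = v"
    using invoD[OF PM_invo[OF assms(1)]] xy assms by auto
  have "x \<noteq> u" "x \<noteq> v" "mate N x \<noteq> u" "mate N x \<noteq> v" using f fe by auto
  then have "x \<noteq> mate N u" "x \<noteq> mate N v" using m by metis+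
  then have "sw u v (mate N) x = mate N x" unfolding sw_def using \<open>x \<noteq> u\<close> \<open>x \<noteq> v\<close> by simp
  then show "f \<in> phi n {u, v} N" unfolding phi_uv[OF assms] E_def using fe xy by auto
qed

lemma phi_notPM: "\<not> PM n N \<Longrightarrow> phi n e N = N"
  unfolding phi_def by simp

lemma phi_comm:
  assumes "e1 \<in> Kedges n" "e2 \<in> Kedges n" "e1 = e2 \<or> e1 \<inter> e2 = {}"
  shows "phi n e1 (phi n e2 N) = phi n e2 (phi n e1 N)"
proof (cases "e1 = e2")
  case True then show ?thesis by simp
next
  case False
  then have d: "e1 \<inter> e2 = {}" using assms(3) by simp
  obtain u1 v1 where 1: "e1 = {u1, v1}" "u1 \<noteq> v1" "u1 < 2*n" "v1 < 2*n" using assms(1) unfolding Kedges_def by blast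
  obtain u2 v2 where 2: "e2 = {u2, v2}" "u2 \<noteq> v2" "u2 < 2*n" "v2 < 2*n" using assms(2) unfolding Kedges_def by blast
  show ?thesis
  proof (cases "PM n N")
    case False
    then show ?thesis using phi_props(1) 1 2 phi_notPM by metis
  next
    case True
    have P1: "PM n (phi n e1 N)" "PM n (phi n e2 N)" using phi_props(1) 1 2 True by auto
    show ?thesis
    proof (rule PM_eqI[where n=n])
      show "PM n (phi n e1 (phi n e2 N))" using phi_props(1) 1 P1 by auto
      show "PM n (phi n e2 (phi n e1 N))" using phi_props(1) 2 P1 by auto
      fix w assume w: "w < 2*n"
      have "mate (phi n e1 (phi n e2 N)) w = sw u1 v1 (mate (phi n e2 N)) w"
        using phi_props(2)[OF P1(2) 1(3,4,2) w] 1 by simp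
      also have "\<dots> = sw u1 v1 (sw u2 v2 (mate N)) w"
        by (rule sw_loc) (use phi_props(2)[OF True 2(3,4,2)] 1 2 w in auto)
      also have "\<dots> = sw u2 v2 (sw u1 v1 (mate N)) w"
        by (rule sw_comm[OF PM_invo[OF True]]) (use 1 2 d w in auto)
      also have "\<dots> = sw u2 v2 (mate (phi n e1 N)) w"
        by (rule sw_loc) (use phi_props(2)[OF True 1(3,4,2)] 1 2 w in auto)
      also have "\<dots> = mate (phi n e2 (phi n e1 N)) w"
        using phi_props(2)[OF P1(1) 2(3,4,2) w] 2 by simp
      finally show "mate (phi n e1 (phi n e2 N)) w = mate (phi n e2 (phi n e1 N)) w" .
    qed
  qed
qed


lemma Kedges_fin: "finite (Kedges n)"
  by (rule finite_subset[of _ "Pow {..<2*n}"]) (auto simp: Kedges_def)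

lemma matching_fin: "is_matching n A \<Longrightarrow> finite A"
  unfolding is_matching_def using Kedges_fin finite_subset by blast

lemma cfc: assumes "is_matching n A" shows "comp_fun_commute_on A (phi n)"
proof
  fix x y assume "x \<in> A" "y \<in> A"
  then have "y \<in> Kedges n" "x \<in> Kedges n" "y = x \<or> y \<inter> x = {}"
    using assms unfolding is_matching_def by auto
  then show "phi n y \<circ> phi n x = phi n x \<circ> phi n y"
    using phi_comm[of y n x] by (intro ext) simp
qed

definition Phi :: "nat \<Rightarrow> nat set set \<Rightarrow> nat set set \<Rightarrow> nat set set" where
  "Phi n B N = Finite_Set.fold (phi n) N B"

lemma Phi_rec:
  assumes "is_matching n A" "B \<subseteq> A" "e \<in> B"
  shows "Phi n B N = phi n e (Phi n (B - {e}) N)"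
  unfolding Phi_def
  using comp_fun_commute_on.fold_rec[OF cfc[OF assms(1)] assms(2) _ assms(3)]
    finite_subset[OF assms(2) matching_fin[OF assms(1)]] by blast

lemma Phi_props:
  assumes "is_matching n A" "B \<subseteq> A" "PM n N"
  shows "PM n (Phi n B N) \<and> B \<subseteq> Phi n B N \<and> (\<forall>f\<in>N. f \<inter> \<Union>B = {} \<longrightarrow> f \<in> Phi n B N)"
proof -
  have "finite B" using finite_subset[OF assms(2) matching_fin[OF assms(1)]] .
  then show ?thesis using assms(2)
  proof (induction B rule: finite_induct)
    case empty
    then show ?case using assms(3) by (simp add: Phi_def)
  next
    case (insert e F)
    have eq: "Phi n (insert e F) N = phi n e (Phi n F N)"
      unfolding Phi_def using comp_fun_commute_on.fold_insert[OF cfc[OF assms(1)] insert.prems insert.hyps(1,2)] .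
    have IH: "PM n (Phi n F N)" "F \<subseteq> Phi n F N" "\<forall>f\<in>N. f \<inter> \<Union>F = {} \<longrightarrow> f \<in> Phi n F N"
      using insert by auto
    have eA: "e \<in> A" using insert.prems by auto
    then obtain u v where uv: "e = {u, v}" "u \<noteq> v" "u < 2*n" "v < 2*n"
      using assms(1) unfolding is_matching_def Kedges_def by blast
    have dis: "\<And>f. f \<in> F \<Longrightarrow> f \<inter> e = {}"
    proof -
      fix f assume "f \<in> F"
      then have "f \<in> A" "f \<noteq> e" using insert by auto
      then show "f \<inter> e = {}" using assms(1) eA unfolding is_matching_def by blast
    qed
    have g1: "PM n (phi n {u, v} (Phi n F N))" using phi_props(1)[OF IH(1) uv(3,4,2)] .
    have g2: "insert {u, v} F \<subseteq> phi n {u, v} (Phi n F N)"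
        using phi_props(3,4)[OF IH(1) uv(3,4,2)] IH(2) dis uv(1) by auto
    have g3: "\<forall>f\<in>N. f \<inter> \<Union> (insert {u, v} F) = {} \<longrightarrow> f \<in> phi n {u, v} (Phi n F N)"
        using phi_props(4)[OF IH(1) uv(3,4,2)] IH(3) by auto
    have "Phi n (insert e F) N = phi n {u, v} (Phi n F N)" using eq uv(1) by simp
    then show ?case using g1 g2 g3 uv(1) by simp
  qed
qed

lemma PM_card: assumes "PM n N" shows "card N = n"
proof -
  have fin: "finite N" using assms unfolding is_perfect_matching_def using matching_fin by blast
  have c2: "\<And>e. e \<in> N \<Longrightarrow> card e = 2" using PM_edge[OF assms] by fastforce
  have "card (\<Union>N) = (\<Sum>e\<in>N. card e)"
    apply (rule card_Union_disjoint)
    using assms fin unfolding is_perfect_matching_def is_matching_def pairwise_def disjnt_def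
    by (auto simp: c2) (metis c2 card.infinite zero_neq_numeral)
  also have "\<dots> = 2 * card N" using c2 by simp
  finally show ?thesis using assms unfolding is_perfect_matching_def by simp
qed


definition rw :: "nat set set \<Rightarrow> nat \<Rightarrow> nat \<Rightarrow> nat \<Rightarrow> nat \<Rightarrow> nat set set" where
  "rw M u v x y = (M - {{u, v}, {x, y}}) \<union> {{u, y}, {v, x}}"

definition Sfib :: "nat \<Rightarrow> nat set set \<Rightarrow> nat set set \<Rightarrow> nat \<Rightarrow> nat \<Rightarrow> nat set set set" where
  "Sfib n B M u v = {N. PM n N \<and> B - {{u, v}} \<subseteq> N \<and> phi n {u, v} N = M}"

locale stepctx =
  fixes n :: nat and B M :: "nat set set" and u v :: nat
  assumes PMM: "PM n M" and BM: "B \<subseteq> M" and uvB: "{u, v} \<in> B"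
begin

abbreviation "m \<equiv> mate M"

lemma uv: "u \<noteq> v" "u < 2*n" "v < 2*n"
  using PM_edge[OF PMM, of "{u,v}"] uvB BM by (auto simp: doubleton_eq_iff)

lemma mu: "m u = v" "m v = u"
  using PM_edge_mate[OF PMM, of "{u,v}" u] PM_edge_mate[OF PMM, of "{u,v}" v] uvB BM uv
  by (auto simp: doubleton_eq_iff)

lemma rw_main:
  assumes xyR: "{x, y} \<in> M - B" and xy: "x \<noteq> y"
  shows "rw M u v x y \<in> Sfib n B M u v" "rw M u v x y \<noteq> M"
    "mate (rw M u v x y) u = y" "mate (rw M u v x y) v = x"
    "\<And>w. w < 2*n \<Longrightarrow> mate (rw M u v x y) w = (m(u := y, y := u, v := x, x := v)) w"
proof -
  have xyM: "{x, y} \<in> M" using xyR by auto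
  have xyb: "x < 2*n" "y < 2*n" using PM_sub[OF PMM xyM] by auto
  have mx: "m x = y" "m y = x"
    using PM_edge_mate[OF PMM xyM, of x] PM_edge_mate[OF PMM xyM, of y] xy
    by (auto simp: doubleton_eq_iff)
  have ne: "{x, y} \<noteq> {u, v}" using xyR uvB by auto
  have d: "x \<noteq> u" "x \<noteq> v" "y \<noteq> u" "y \<noteq> v"
    using PM_disj[OF PMM xyM BM[THEN subsetD, OF uvB]] ne by auto
  define g where "g = m(u := y, y := u, v := x, x := v)"
  have I: "invo n m" using PM_invo[OF PMM] .
  have gv: "g u = y" "g y = u" "g v = x" "g x = v"
    unfolding g_def using d uv xy by auto
  have go: "\<And>w. w \<noteq> u \<Longrightarrow> w \<noteq> v \<Longrightarrow> w \<noteq> x \<Longrightarrow> w \<noteq> y \<Longrightarrow> g w = m w"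
    unfolding g_def by simp
  have gI: "invo n g" unfolding invo_def
  proof (intro allI impI)
    fix w assume w: "w < 2*n"
    show "g w < 2 * n \<and> g w \<noteq> w \<and> g (g w) = w"
    proof (cases "w = u \<or> w = v \<or> w = x \<or> w = y")
      case True
      then show ?thesis using gv d uv xyb xy by auto
    next
      case False
      then have gw: "g w = m w" using go by blast
      have "m w \<noteq> u" "m w \<noteq> v" "m w \<noteq> x" "m w \<noteq> y"
        using False mu mx invoD[OF I w] by metis+
      then have "g (m w) = m (m w)" using go by blast
      then show ?thesis using gw invoD[OF I w] by simp
    qed
  qed
  have rwE: "rw M u v x y = E n g"
  proof
    show "E n g \<subseteq> rw M u v x y"
    proof
      fix f assume "f \<in> E n g"
      then obtain w where w: "w < 2*n" "f = {w, g w}" unfolding E_def by auto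
      show "f \<in> rw M u v x y"
      proof (cases "w \<in> {u, v, x, y}")
        case True
        then have "f \<in> {{u, y}, {v, x}}" using w gv by (auto simp: insert_commute)
        then show ?thesis unfolding rw_def by blast
      next
        case False
        then have "g w = m w" using go by blast
        moreover have "{w, m w} \<in> M" using PM_mate[OF PMM w(1)] by auto
        moreover have "{w, m w} \<noteq> {u, v}" "{w, m w} \<noteq> {x, y}" using False by auto
        ultimately show ?thesis using w unfolding rw_def by auto
      qed
    qed
    show "rw M u v x y \<subseteq> E n g"
    proof
      fix f assume f: "f \<in> rw M u v x y"
      show "f \<in> E n g"
      proof (cases "f \<in> {{u, y}, {v, x}}")
        case True
        moreover have "{u, y} \<in> E n g" unfolding E_def
          using imageI[of u "{..<2*n}" "\<lambda>w. {w, g w}"] uv(2) gv(1) by simp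
        moreover have "{v, x} \<in> E n g" unfolding E_def
          using imageI[of v "{..<2*n}" "\<lambda>w. {w, g w}"] uv(3) gv(3) by simp
        ultimately show ?thesis by blast
      next
        case False
        then have fM: "f \<in> M" "f \<noteq> {u, v}" "f \<noteq> {x, y}" using f unfolding rw_def by auto
        obtain a b where ab: "f = {a, b}" "a < 2*n" using PM_edge[OF PMM fM(1)] by blast
        have fa: "f = {a, m a}" using PM_edge_mate[OF PMM fM(1), of a] ab by auto
        have "a \<notin> {u, v, x, y}"
          using fa fM mu mx by (auto simp: insert_commute)
        then have "g a = m a" using go by blast
        then have "f = {a, g a}" using fa by simp
        then show ?thesis unfolding E_def using ab(2) by blast
      qed
    qed
  qed
  have PMrw: "PM n (rw M u v x y)" using invo_PM[OF gI] rwE by simp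
  have mrw: "\<And>w. w < 2*n \<Longrightarrow> mate (rw M u v x y) w = g w" using invo_mate[OF gI] rwE by simp
  then show "\<And>w. w < 2*n \<Longrightarrow> mate (rw M u v x y) w = (m(u := y, y := u, v := x, x := v)) w"
    unfolding g_def .
  show mu': "mate (rw M u v x y) u = y" "mate (rw M u v x y) v = x"
    using mrw uv gv by auto
  show "rw M u v x y \<noteq> M" using mu' mu d by auto
  have "phi n {u, v} (rw M u v x y) = M"
  proof (rule PM_eqI[where n=n])
    show "PM n (phi n {u, v} (rw M u v x y))" using phi_props(1)[OF PMrw uv(2,3,1)] .
    show "PM n M" by (rule PMM)
    fix w assume w: "w < 2*n"
    have "mate (phi n {u, v} (rw M u v x y)) w = sw u v (mate (rw M u v x y)) w"
      using phi_props(2)[OF PMrw uv(2,3,1) w] .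
    also have "\<dots> = sw u v g w" by (rule sw_loc) (use mrw uv w in auto)
    also have "\<dots> = m w" unfolding sw_def using go[of w] gv d uv mu mx xy by auto
    finally show "mate (phi n {u, v} (rw M u v x y)) w = m w" .
  qed
  moreover have "B - {{u, v}} \<subseteq> rw M u v x y" using BM xyR unfolding rw_def by auto
  ultimately show "rw M u v x y \<in> Sfib n B M u v" using PMrw unfolding Sfib_def by simp
qed

lemma M_in_S: "M \<in> Sfib n B M u v"
proof -
  have "phi n {u, v} M = M"
  proof (rule PM_eqI[where n=n])
    show "PM n (phi n {u, v} M)" using phi_props(1)[OF PMM uv(2,3,1)] .
    show "PM n M" by (rule PMM)
    fix w assume w: "w < 2*n"
    show "mate (phi n {u, v} M) w = m w"
      using phi_props(2)[OF PMM uv(2,3,1) w] mu unfolding sw_def by auto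
  qed
  then show ?thesis using PMM BM unfolding Sfib_def by auto
qed

lemma S_cases:
  assumes N: "N \<in> Sfib n B M u v"
  shows "N = M \<or> (\<exists>x y. {x, y} \<in> M - B \<and> x \<noteq> y \<and> N = rw M u v x y)"
proof -
  have PN: "PM n N" and BN: "B - {{u, v}} \<subseteq> N" and ph: "phi n {u, v} N = M"
    using N unfolding Sfib_def by auto
  define k where "k = mate N"
  have I: "invo n k" unfolding k_def using PM_invo[OF PN] .
  have mM: "\<And>w. w < 2*n \<Longrightarrow> m w = sw u v k w"
    using phi_props(2)[OF PN uv(2,3,1)] ph unfolding k_def by simp
  show ?thesis
  proof (cases "k u = v")
    case True
    have "N = M"
    proof (rule PM_eqI[where n=n])
      show "PM n N" "PM n M" by (rule PN, rule PMM)
      fix w assume w: "w < 2*n"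
      have "k v = u" using True invoD[OF I uv(2)] by auto
      then show "mate N w = m w" using mM[OF w] True unfolding sw_def k_def by auto
    qed
    then show ?thesis by simp
  next
    case False
    define y where "y = k u"
    define x where "x = k v"
    have ku: "k (k u) = u" "k (k v) = v" "k u \<noteq> u" "k v \<noteq> v" "k u < 2*n" "k v < 2*n"
      using invoD[OF I uv(2)] invoD[OF I uv(3)] by auto
    have d: "y \<noteq> v" "x \<noteq> u" "y \<noteq> u" "x \<noteq> v" "x \<noteq> y"
      unfolding x_def y_def using False ku uv by metis+
    have xyb: "x < 2*n" "y < 2*n" using ku unfolding x_def y_def by auto
    have my: "m y = x" using mM[OF xyb(2)] d unfolding sw_def x_def y_def by auto
    have xyM: "{x, y} \<in> M" using PM_mate(1)[OF PMM xyb(2)] my by (auto simp: insert_commute)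
    have vxN: "{v, x} \<in> N" using PM_mate(1)[OF PN uv(3)] unfolding x_def k_def by auto
    have xyB: "{x, y} \<notin> B"
    proof
      assume "{x, y} \<in> B"
      moreover have "{x, y} \<noteq> {u, v}" using d by (auto simp: doubleton_eq_iff)
      ultimately have "{x, y} \<in> N" using BN by auto
      then have "{x, y} = {v, x}" using PM_disj[OF PN _ vxN, of "{x,y}" x] by auto
      then show False using d by (auto simp: doubleton_eq_iff)
    qed
    have "N = rw M u v x y"
    proof (rule PM_eqI[where n=n])
      show "PM n N" by (rule PN)
      have R: "{x, y} \<in> M - B" using xyM xyB by auto
      show "PM n (rw M u v x y)" using rw_main(1)[OF R d(5)] unfolding Sfib_def by auto
      fix w assume w: "w < 2*n"
      have R: "{x, y} \<in> M - B" using xyM xyB by auto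
      have mx: "m x = y" using mM[OF xyb(1)] d unfolding sw_def x_def y_def
        using ku by auto
      have "mate (rw M u v x y) w = (m(u := y, y := u, v := x, x := v)) w"
        using rw_main(5)[OF R d(5) w] .
      also have "\<dots> = k w"
        using mM[OF w] d ku unfolding x_def y_def sw_def by auto
      finally show "mate N w = mate (rw M u v x y) w" unfolding k_def by simp
    qed
    then show ?thesis using xyM xyB d(5) by auto
  qed
qed

end

lemma unif_pmf:
  assumes "finite S" "S \<noteq> {}" "\<And>x. pmf Q x = (if x \<in> S then c else 0)"
  shows "Q = pmf_of_set S \<and> c * card S = 1"
proof -
  have sub: "set_pmf Q \<subseteq> S" using assms(3) by (auto simp: set_pmf_eq)
  have "sum (pmf Q) S = 1" using sum_pmf_eq_1[OF assms(1) sub] .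
  then have c: "c * card S = 1" using assms(3) by (simp add: mult.commute)
  have "Q = pmf_of_set S"
  proof (rule pmf_eqI)
    fix x
    have "card S > 0" using assms(1,2) by (simp add: card_gt_0_iff)
    then show "pmf Q x = pmf (pmf_of_set S) x"
      using assms c by (auto simp: indicator_def field_simps)
  qed
  then show ?thesis using c by simp
qed

context stepctx begin

definition "R = M - B"
definition "Or e = {(x, y). {x, y} = e \<and> x \<noteq> y}"
definition "pp = 1 - 1 / (2 * real (card R) + 1)"
definition "Q = (if R = {} then return_pmf M else
   bind_pmf (pmf_of_set R) (\<lambda>e. bind_pmf (pmf_of_set (Or e)) (\<lambda>xy.
     bind_pmf (bernoulli_pmf pp) (\<lambda>b. return_pmf (if b then rw M u v (fst xy) (snd xy) else M)))))"

lemma finR: "finite R"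
  unfolding R_def using PMM unfolding is_perfect_matching_def using matching_fin by blast

lemma Or_props:
  assumes "e \<in> R"
  shows "finite (Or e)" "card (Or e) = 2" "Or e \<noteq> {}"
    "\<And>xy. xy \<in> Or e \<Longrightarrow> {fst xy, snd xy} \<in> R \<and> fst xy \<noteq> snd xy"
proof -
  obtain a b where ab: "e = {a, b}" "a \<noteq> b" using PM_edge[OF PMM, of e] assms unfolding R_def by blast
  have "Or e = {(a, b), (b, a)}" unfolding Or_def ab(1) using ab(2) by (auto simp: doubleton_eq_iff)
  moreover have "card {(a, b), (b, a)} = 2" using ab(2) by simp
  ultimately show "finite (Or e)" "card (Or e) = 2" "Or e \<noteq> {}" by auto
  fix xy assume "xy \<in> Or e" then show "{fst xy, snd xy} \<in> R \<and> fst xy \<noteq> snd xy"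
    using assms unfolding Or_def by auto
qed

lemma pp01: "0 \<le> pp" "pp \<le> 1" unfolding pp_def by (auto simp: field_simps)

lemma pmfQ: "pmf Q N = (if N \<in> Sfib n B M u v then 1 / (2 * real (card R) + 1) else 0)"
proof (cases "R = {}")
  case True
  have "N \<in> Sfib n B M u v \<longleftrightarrow> N = M" using S_cases[of N] M_in_S True unfolding R_def by auto
  then show ?thesis using True unfolding Q_def by (auto simp: indicator_def)
next
  case False
  define T where "T xy = (if rw M u v (fst xy) (snd xy) = N then pp else 0) + (if M = N then 1 - pp else 0)" for xy
  have Q3: "pmf (bind_pmf (bernoulli_pmf pp) (\<lambda>b. return_pmf (if b then rw M u v (fst xy) (snd xy) else M))) N = T xy" for xy
    unfolding T_def by (simp add: pmf_bind pp01 indicator_def)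
  have Q2: "pmf (bind_pmf (pmf_of_set (Or e)) (\<lambda>xy.
     bind_pmf (bernoulli_pmf pp) (\<lambda>b. return_pmf (if b then rw M u v (fst xy) (snd xy) else M)))) N
     = (\<Sum>xy\<in>Or e. T xy) / 2" if "e \<in> R" for e
    unfolding pmf_bind[of "pmf_of_set (Or e)"] integral_pmf_of_set[OF Or_props(3,1)[OF that]] Q3
    using Or_props(2)[OF that] by simp
  have Q1: "pmf Q N = (\<Sum>e\<in>R. (\<Sum>xy\<in>Or e. T xy) / 2) / card R"
  proof -
    have qeq: "Q = bind_pmf (pmf_of_set R) (\<lambda>e. bind_pmf (pmf_of_set (Or e)) (\<lambda>xy.
     bind_pmf (bernoulli_pmf pp) (\<lambda>b. return_pmf (if b then rw M u v (fst xy) (snd xy) else M))))"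
      using False unfolding Q_def by simp
    show ?thesis
      unfolding qeq pmf_bind[of "pmf_of_set R"] integral_pmf_of_set[OF False finR]
      using Q2 by (intro arg_cong[where f="\<lambda>x. x / _"] sum.cong) auto
  qed
  have r0: "card R > 0" using False finR by (simp add: card_gt_0_iff)
  show ?thesis
  proof (cases "N = M")
    case True
    have "T xy = 1 - pp" if "e \<in> R" "xy \<in> Or e" for e xy
      using rw_main(2)[of "fst xy" "snd xy"] Or_props(4)[OF that] True unfolding T_def R_def by auto
    then have "(\<Sum>e\<in>R. (\<Sum>xy\<in>Or e. T xy) / 2) = (\<Sum>e\<in>R. 1 - pp)"
      using Or_props(2) by (intro sum.cong) auto
    then have "pmf Q N = 1 - pp" using Q1 r0 by simp
    then show ?thesis using True M_in_S unfolding pp_def by simp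
  next
    case NM: False
    show ?thesis
    proof (cases "N \<in> Sfib n B M u v")
      case False
      have "T xy = 0" if "e \<in> R" "xy \<in> Or e" for e xy
        using rw_main(1)[of "fst xy" "snd xy"] Or_props(4)[OF that] False NM unfolding T_def R_def by auto
      then have "(\<Sum>e\<in>R. (\<Sum>xy\<in>Or e. T xy) / 2) = 0"
        by (intro sum.neutral) auto
      then show ?thesis using Q1 False by simp
    next
      case True
      then obtain x0 y0 where xy0: "{x0, y0} \<in> R" "x0 \<noteq> y0" "N = rw M u v x0 y0"
        using S_cases NM unfolding R_def by blast
      have T0: "T xy = (if xy = (x0, y0) then pp else 0)" if "e \<in> R" "xy \<in> Or e" for e xy
      proof -
        have v: "{fst xy, snd xy} \<in> M - B" "fst xy \<noteq> snd xy" using Or_props(4)[OF that] unfolding R_def by auto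
        have "rw M u v (fst xy) (snd xy) = N \<longleftrightarrow> xy = (x0, y0)"
        proof
          assume "rw M u v (fst xy) (snd xy) = N"
          then show "xy = (x0, y0)"
            using rw_main(3,4)[OF v] rw_main(3,4)[of x0 y0] xy0 unfolding R_def by (cases xy) auto
        qed (use xy0 in auto)
        then show ?thesis unfolding T_def using NM by simp
      qed
      have "(\<Sum>e\<in>R. (\<Sum>xy\<in>Or e. T xy) / 2) = (\<Sum>e\<in>R. (if e = {x0, y0} then pp / 2 else 0))"
      proof (rule sum.cong)
        fix e assume e: "e \<in> R"
        have "(\<Sum>xy\<in>Or e. T xy) = (\<Sum>xy\<in>Or e. (if xy = (x0, y0) then pp else 0))"
          using T0[OF e] by (intro sum.cong) auto
        also have "\<dots> = (if (x0, y0) \<in> Or e then pp else 0)" using Or_props(1)[OF e] by simp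
        also have "\<dots> = (if e = {x0, y0} then pp else 0)" using xy0 unfolding Or_def by auto
        finally show "(\<Sum>xy\<in>Or e. T xy) / 2 = (if e = {x0, y0} then pp / 2 else 0)" by simp
      qed simp
      also have "\<dots> = pp / 2" using xy0(1) finR by simp
      finally have "pmf Q N = pp / 2 / card R" using Q1 by (simp only:)
      also have "\<dots> = 1 / (2 * real (card R) + 1)"
      proof -
        have rr: "real (card R) > 0" using r0 by simp
        have "pp = 2 * real (card R) / (2 * real (card R) + 1)" unfolding pp_def
          by (simp add: field_simps)
        then show ?thesis using rr by (simp add: field_simps)
      qed
      finally show ?thesis using True by simp
    qed
  qed
qed

end

lemma PM_fin: "finite {N. PM n N}"
  by (rule finite_subset[of _ "Pow (Kedges n)"])
     (auto simp: is_perfect_matching_def is_matching_def Kedges_fin)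

context stepctx begin

lemma step_eq:
  assumes "sel B M = (u, v)"
  shows "rA_step sel (B, M) = map_pmf (Pair (B - {{u, v}})) (pmf_of_set (Sfib n B M u v))
         \<and> card (Sfib n B M u v) = 2 * card R + 1"
proof -
  have fS: "finite (Sfib n B M u v)"
    by (rule finite_subset[OF _ PM_fin[of n]]) (auto simp: Sfib_def)
  have ne: "Sfib n B M u v \<noteq> {}" using M_in_S by auto
  have U: "Q = pmf_of_set (Sfib n B M u v) \<and> 1 / (2 * real (card R) + 1) * card (Sfib n B M u v) = 1"
    by (rule unif_pmf[OF fS ne pmfQ])
  then have "real (card (Sfib n B M u v)) = 2 * real (card R) + 1"
    by (simp add: field_simps)
  then have c: "card (Sfib n B M u v) = 2 * card R + 1" by linarith
  have "rA_step sel (B, M) = map_pmf (Pair (B - {{u, v}})) Q"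
    using assms unfolding rA_step_def Q_def R_def pp_def rw_def Or_def
    by (simp add: Let_def map_bind_pmf)
  then show ?thesis using U c by simp
qed

end

lemma bind_uniform:
  assumes "finite S" "S \<noteq> {}" "\<And>s. s \<in> S \<Longrightarrow> finite (T s) \<and> card (T s) = c" "c > 0"
    "disjoint_family_on T S"
  shows "bind_pmf (pmf_of_set S) (\<lambda>s. pmf_of_set (T s)) = pmf_of_set (\<Union>s\<in>S. T s)
         \<and> card (\<Union>s\<in>S. T s) = card S * c"
proof -
  have ne: "\<And>s. s \<in> S \<Longrightarrow> T s \<noteq> {}" using assms(3,4) by fastforce
  have cU: "card (\<Union>s\<in>S. T s) = card S * c"
    using card_UN_disjoint[OF assms(1), of T] assms(3,5) unfolding disjoint_family_on_def by simp
  have fU: "finite (\<Union>s\<in>S. T s)" using assms(1,3) by auto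
  have neU: "(\<Union>s\<in>S. T s) \<noteq> {}" using assms(2) ne by auto
  have "bind_pmf (pmf_of_set S) (\<lambda>s. pmf_of_set (T s)) = pmf_of_set (\<Union>s\<in>S. T s)"
  proof (rule pmf_eqI)
    fix x
    have "pmf (bind_pmf (pmf_of_set S) (\<lambda>s. pmf_of_set (T s))) x
        = (\<Sum>s\<in>S. pmf (pmf_of_set (T s)) x) / card S"
      unfolding pmf_bind integral_pmf_of_set[OF assms(2,1)] ..
    also have "\<dots> = (\<Sum>s\<in>S. indicator (T s) x / c) / card S"
      using assms(3) ne by (intro arg_cong[where f="\<lambda>y. y / _"] sum.cong) auto
    also have "\<dots> = indicator (\<Union>s\<in>S. T s) x / card (\<Union>s\<in>S. T s)"
    proof (cases "x \<in> (\<Union>s\<in>S. T s)")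
      case True
      then obtain s0 where s0: "s0 \<in> S" "x \<in> T s0" by auto
      have "(\<Sum>s\<in>S. indicator (T s) x / c) = (\<Sum>s\<in>S. if s = s0 then 1 / real c else 0)"
      proof (rule sum.cong)
        fix s assume "s \<in> S"
        then show "indicator (T s) x / real c = (if s = s0 then 1 / real c else 0)"
          using s0 assms(5) unfolding disjoint_family_on_def by (auto simp: indicator_def)
      qed simp
      also have "\<dots> = 1 / real c" using s0(1) assms(1) by simp
      finally show ?thesis using True cU by (simp add: indicator_def)
    next
      case False
      then show ?thesis by (simp add: indicator_def)
    qed
    also have "\<dots> = pmf (pmf_of_set (\<Union>s\<in>S. T s)) x" using fU neU by simp
    finally show "pmf (bind_pmf (pmf_of_set S) (\<lambda>s. pmf_of_set (T s))) x = pmf (pmf_of_set (\<Union>s\<in>S. T s)) x" .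
  qed
  then show ?thesis using cU by simp
qed

definition Fib :: "nat \<Rightarrow> nat set set \<Rightarrow> nat set set \<Rightarrow> nat set set set" where
  "Fib n B M = {N. PM n N \<and> Phi n B N = M}"

fun cc :: "nat \<Rightarrow> nat \<Rightarrow> nat" where
  "cc n 0 = 1"
| "cc n (Suc k) = (2 * (n - Suc k) + 1) * cc n k"

lemma cc_pos: "cc n k > 0" by (induction k) auto

lemma main_ind:
  assumes mA: "is_matching n A" and vs: "valid_selector A sel"
  shows "\<forall>B M. B \<subseteq> A \<longrightarrow> card B = k \<longrightarrow> PM n M \<longrightarrow> B \<subseteq> M \<longrightarrow>
     map_pmf snd (rA_iter sel k (B, M)) = pmf_of_set (Fib n B M) \<and> card (Fib n B M) = cc n k"
proof (induction k)
  case 0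
  show ?case
  proof (intro allI impI)
    fix B M assume B: "B \<subseteq> A" "card B = 0" "PM n M" "B \<subseteq> M"
    have "finite B" using finite_subset[OF B(1) matching_fin[OF mA]] .
    then have "B = {}" using B(2) by simp
    then have F: "Fib n B M = {M}" using B(3) unfolding Fib_def Phi_def by auto
    show "map_pmf snd (rA_iter sel 0 (B, M)) = pmf_of_set (Fib n B M) \<and> card (Fib n B M) = cc n 0"
      unfolding F by (simp add: pmf_of_set_singleton)
  qed
next
  case (Suc k)
  show ?case
  proof (intro allI impI)
    fix B M assume B: "B \<subseteq> A" "card B = Suc k" "PM n M" "B \<subseteq> M"
    have fB: "finite B" using finite_subset[OF B(1) matching_fin[OF mA]] .
    then have Bne: "B \<noteq> {}" using B(2) by auto
    obtain u v where selUV: "sel B M = (u, v)" by (cases "sel B M") auto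
    have uvB: "{u, v} \<in> B" using vs B(1) Bne selUV unfolding valid_selector_def
      by (metis fst_conv snd_conv)
    interpret stepctx n B M u v using B uvB by unfold_locales auto
    define S where "S = Sfib n B M u v"
    define C where "C = B - {{u, v}}"
    have SE: "rA_step sel (B, M) = map_pmf (Pair C) (pmf_of_set S)" "card S = 2 * card R + 1"
      using step_eq[of sel, OF selUV] unfolding S_def C_def by auto
    have fS: "finite S" by (rule finite_subset[OF _ PM_fin[of n]]) (auto simp: S_def Sfib_def)
    have neS: "S \<noteq> {}" using M_in_S unfolding S_def by auto
    have C: "C \<subseteq> A" "card C = k" using B uvB fB unfolding C_def by auto
    have IH: "\<And>N. N \<in> S \<Longrightarrow> map_pmf snd (rA_iter sel k (C, N)) = pmf_of_set (Fib n C N)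
                 \<and> card (Fib n C N) = cc n k"
      using Suc.IH C unfolding S_def Sfib_def C_def by auto
    have "map_pmf snd (rA_iter sel (Suc k) (B, M))
        = bind_pmf (pmf_of_set S) (\<lambda>N. map_pmf snd (rA_iter sel k (C, N)))"
      by (simp add: SE map_bind_pmf bind_map_pmf)
    also have "\<dots> = bind_pmf (pmf_of_set S) (\<lambda>N. pmf_of_set (Fib n C N))"
      by (rule bind_pmf_cong) (use IH fS neS in auto)
    finally have eq1: "map_pmf snd (rA_iter sel (Suc k) (B, M)) = bind_pmf (pmf_of_set S) (\<lambda>N. pmf_of_set (Fib n C N))" .
    have fF: "\<And>N. finite (Fib n C N)"
      by (rule finite_subset[OF _ PM_fin[of n]]) (auto simp: Fib_def)
    have disj: "disjoint_family_on (Fib n C) S" unfolding disjoint_family_on_def Fib_def by auto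
    have BU: "bind_pmf (pmf_of_set S) (\<lambda>N. pmf_of_set (Fib n C N)) = pmf_of_set (\<Union>N\<in>S. Fib n C N)
         \<and> card (\<Union>N\<in>S. Fib n C N) = card S * cc n k"
      by (rule bind_uniform[OF fS neS _ cc_pos disj]) (use IH fF in auto)
    have UF: "(\<Union>N\<in>S. Fib n C N) = Fib n B M"
    proof
      show "(\<Union>N\<in>S. Fib n C N) \<subseteq> Fib n B M"
      proof
        fix N assume "N \<in> (\<Union>N\<in>S. Fib n C N)"
        then obtain N' where N': "N' \<in> S" "PM n N" "Phi n C N = N'" unfolding Fib_def by auto
        have "Phi n B N = phi n {u, v} (Phi n C N)"
          using Phi_rec[OF mA B(1) uvB] unfolding C_def .
        then show "N \<in> Fib n B M" using N' unfolding Fib_def S_def Sfib_def by auto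
      qed
      show "Fib n B M \<subseteq> (\<Union>N\<in>S. Fib n C N)"
      proof
        fix N assume N: "N \<in> Fib n B M"
        then have PN: "PM n N" "Phi n B N = M" unfolding Fib_def by auto
        have pr: "PM n (Phi n C N)" "C \<subseteq> Phi n C N" using Phi_props[OF mA C(1) PN(1)] by auto
        have "Phi n B N = phi n {u, v} (Phi n C N)"
          using Phi_rec[OF mA B(1) uvB] unfolding C_def .
        then have "Phi n C N \<in> S" using pr PN unfolding S_def Sfib_def C_def by auto
        then show "N \<in> (\<Union>N\<in>S. Fib n C N)" using PN unfolding Fib_def by auto
      qed
    qed
    have cR: "card R = n - Suc k"
      using card_Diff_subset[OF fB B(4)] PM_card[OF B(3)] B(2) unfolding R_def by simp
    show "map_pmf snd (rA_iter sel (Suc k) (B, M)) = pmf_of_set (Fib n B M) \<and> card (Fib n B M) = cc n (Suc k)"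
      using eq1 BU UF SE(2) cR by simp
  qed
qed


lemma PM_exists: "\<exists>N. PM n N"
proof -
  define g :: "nat \<Rightarrow> nat" where "g w = (if even w then w + 1 else w - 1)" for w
  have "invo n g" unfolding invo_def g_def
  proof (intro allI impI)
    fix w :: nat assume w: "w < 2*n"
    show "(if even w then w + 1 else w - 1) < 2 * n \<and>
       (if even w then w + 1 else w - 1) \<noteq> w \<and>
       (if even (if even w then w + 1 else w - 1) then (if even w then w + 1 else w - 1) + 1
        else (if even w then w + 1 else w - 1) - 1) = w"
    proof (cases "even w")
      case True
      then have "w + 1 < 2 * n" using w by presburger
      then show ?thesis using True by auto
    next
      case False
      then have "w \<ge> 1" by (cases w) auto
      then show ?thesis using False w by auto
    qed
  qed
  then show ?thesis using invo_PM by blast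
qed

theorem mainTheorem14:
  fixes n :: nat and A :: "nat set set"
    and sel :: "nat set set \<Rightarrow> nat set set \<Rightarrow> nat \<times> nat"
  assumes "is_matching n A"
    and "valid_selector A sel"
  shows "bind_pmf (pmf_of_set {M. is_perfect_matching n M \<and> A \<subseteq> M}) (rA sel A)
           = pmf_of_set {M. is_perfect_matching n M}
         \<and> (\<forall>M M'. is_perfect_matching n M \<and> A \<subseteq> M \<and> M' \<in> set_pmf (rA sel A M)
             \<longrightarrow> (\<forall>e\<in>M' - M. e \<inter> \<Union>A \<noteq> {})
               \<and> (\<forall>B. B \<subseteq> Kedges n \<and> is_matching n (A \<union> B) \<and> \<not> B \<subseteq> M \<longrightarrow> \<not> B \<subseteq> M'))"
proof -
  note mA = assms(1)
  define TA where "TA = {M. PM n M \<and> A \<subseteq> M}"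
  have R: "\<And>M. M \<in> TA \<Longrightarrow> rA sel A M = pmf_of_set (Fib n A M) \<and> card (Fib n A M) = cc n (card A)"
    using main_ind[OF assms, of "card A"] unfolding TA_def rA_def by auto
  have fF: "\<And>M. finite (Fib n A M)"
    by (rule finite_subset[OF _ PM_fin[of n]]) (auto simp: Fib_def)
  have neF: "\<And>M. M \<in> TA \<Longrightarrow> Fib n A M \<noteq> {}" using R cc_pos by (metis card.empty less_irrefl)
  have fT: "finite TA" by (rule finite_subset[OF _ PM_fin[of n]]) (auto simp: TA_def)
  obtain N0 where N0: "PM n N0" using PM_exists by blast
  have neT: "TA \<noteq> {}" using Phi_props[OF mA subset_refl N0] unfolding TA_def by auto
  have part1: "bind_pmf (pmf_of_set TA) (rA sel A) = pmf_of_set {M. PM n M}"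
  proof -
    have "bind_pmf (pmf_of_set TA) (rA sel A) = bind_pmf (pmf_of_set TA) (\<lambda>M. pmf_of_set (Fib n A M))"
      by (rule bind_pmf_cong) (use R fT neT in auto)
    also have "\<dots> = pmf_of_set (\<Union>M\<in>TA. Fib n A M)"
    proof -
      have disj: "disjoint_family_on (Fib n A) TA" unfolding disjoint_family_on_def Fib_def by auto
      show ?thesis
        by (rule conjunct1[OF bind_uniform[OF fT neT _ cc_pos disj]]) (use R fF in auto)
    qed
    also have "(\<Union>M\<in>TA. Fib n A M) = {M. PM n M}"
    proof
      show "(\<Union>M\<in>TA. Fib n A M) \<subseteq> {M. PM n M}" unfolding Fib_def by auto
      show "{M. PM n M} \<subseteq> (\<Union>M\<in>TA. Fib n A M)"
      proof
        fix N assume "N \<in> {M. PM n M}"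
        then have N: "PM n N" by simp
        then have "Phi n A N \<in> TA" using Phi_props[OF mA subset_refl N] unfolding TA_def by auto
        then show "N \<in> (\<Union>M\<in>TA. Fib n A M)" using N unfolding Fib_def by auto
      qed
    qed
    finally show ?thesis .
  qed
  have part2: "(\<forall>e\<in>M' - M. e \<inter> \<Union>A \<noteq> {})
               \<and> (\<forall>B. B \<subseteq> Kedges n \<and> is_matching n (A \<union> B) \<and> \<not> B \<subseteq> M \<longrightarrow> \<not> B \<subseteq> M')"
    if M: "PM n M" "A \<subseteq> M" "M' \<in> set_pmf (rA sel A M)" for M M'
  proof -
    have MT: "M \<in> TA" using M unfolding TA_def by auto
    have "M' \<in> Fib n A M" using M(3) R[OF MT] fF neF[OF MT] by simp
    then have M': "PM n M'" "Phi n A M' = M" unfolding Fib_def by auto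
    have P: "\<forall>f\<in>M'. f \<inter> \<Union>A = {} \<longrightarrow> f \<in> M" using Phi_props[OF mA subset_refl M'(1)] M'(2) by auto
    have c1: "\<forall>e\<in>M' - M. e \<inter> \<Union>A \<noteq> {}" using P by auto
    have c2: "\<not> B \<subseteq> M'" if B: "B \<subseteq> Kedges n" "is_matching n (A \<union> B)" "\<not> B \<subseteq> M" for B
    proof
      assume BM': "B \<subseteq> M'"
      obtain b where b: "b \<in> B" "b \<notin> M" using B(3) by auto
      then have "b \<inter> \<Union>A \<noteq> {}" using c1 BM' by auto
      then obtain a where a: "a \<in> A" "b \<inter> a \<noteq> {}" by auto
      have "b \<notin> A" using b M(2) by auto
      then have "b \<noteq> a" using a by auto
      moreover have "a \<in> A \<union> B" "b \<in> A \<union> B" using a b by auto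
      ultimately show False using B(2) a(2) unfolding is_matching_def by blast
    qed
    show ?thesis
    proof (intro conjI allI impI)
      show "\<forall>e\<in>M' - M. e \<inter> \<Union>A \<noteq> {}" by (rule c1)
      fix B assume h: "B \<subseteq> Kedges n \<and> is_matching n (A \<union> B) \<and> \<not> B \<subseteq> M"
      have "B \<subseteq> Kedges n" "is_matching n (A \<union> B)" "\<not> B \<subseteq> M" using h by simp_all
      then show "\<not> B \<subseteq> M'" by (rule c2)
    qed
  qed
  have p1: "bind_pmf (pmf_of_set {M. PM n M \<and> A \<subseteq> M}) (rA sel A) = pmf_of_set {M. PM n M}"
    using part1 unfolding TA_def .
  show ?thesis
  proof (rule conjI[OF p1], intro allI impI)
    fix M M' assume h: "PM n M \<and> A \<subseteq> M \<and> M' \<in> set_pmf (rA sel A M)"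
    have h': "PM n M" "A \<subseteq> M" "M' \<in> set_pmf (rA sel A M)" using h by simp_all
    show "(\<forall>e\<in>M' - M. e \<inter> \<Union>A \<noteq> {})
               \<and> (\<forall>B. B \<subseteq> Kedges n \<and> is_matching n (A \<union> B) \<and> \<not> B \<subseteq> M \<longrightarrow> \<not> B \<subseteq> M')"
      by (rule part2[OF h'])
  qed
qed


end
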